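(* Let $q$ be a prime power, $V=\mathbb F_{q^2}^3$ with Hermitian form $\varphi(x,y)=x_1\bar y_3+x_3\bar y_1+x_2\bar y_2$ (where $\bar a=a^q$), let $\mathcal V$ be the set of isotropic $1$-spaces of $V$ (so $|\mathcal V|=q^3+1$), and let $G={\rm P\Gamma U}(3,q)$, the subgroup of ${\rm P\Gamma L}(3,q^2)$ preserving $\varphi$, acting on $\mathcal V$. Each non-degenerate $2$-space $L$ of $V$ contains exactly $q+1$ elements of $\mathcal V$; let $\Gamma\subset\binom{\mathcal V}{q+1}$ be the set of the subsets $L\cap\mathcal V$ for $L$ ranging over the non-degenerate $2$-spaces (the classical unital). Then $\Gamma$ is $G$-strongly incidence-transitive and has minimum distance $\delta(\Gamma)=q$.
   Context: $\Gamma$ is regarded as a code in the Johnson graph $J(q^3+1,q+1)$ (vertices: $(q+1)$-subsets of $\mathcal V$; adjacency: intersection of size $q$); $\delta(\Gamma)$ is the least graph distance between distinct codewords. $\Gamma$ is $G$-strongly incidence-transitive if $G$ leaves $\Gamma$ invariant, is transitive on $\Gamma$, and for $\gamma\in\Gamma$, $G_\gamma$ is transitive on $\gamma\times(\mathcal V\setminus\gamma)$. *)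

theory Defs
  imports "HOL-Computational_Algebra.Primes"
begin

type_synonym 'a vec3 = "'a \<times> 'a \<times> 'a"

definition vadd :: "'a::field vec3 \<Rightarrow> 'a vec3 \<Rightarrow> 'a vec3" where
  "vadd x y = (case x of (x1,x2,x3) \<Rightarrow> case y of (y1,y2,y3) \<Rightarrow> (x1+y1, x2+y2, x3+y3))"

definition smul :: "'a::field \<Rightarrow> 'a vec3 \<Rightarrow> 'a vec3" where
  "smul c x = (case x of (x1,x2,x3) \<Rightarrow> (c*x1, c*x2, c*x3))"

definition vzero :: "'a::field vec3" where "vzero = (0,0,0)"

definition hform :: "nat \<Rightarrow> 'a::field vec3 \<Rightarrow> 'a vec3 \<Rightarrow> 'a" where
  "hform q x y = (case x of (x1,x2,x3) \<Rightarrow> case y of (y1,y2,y3) \<Rightarrow>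
      x1 * y3 ^ q + x3 * y1 ^ q + x2 * y2 ^ q)"

definition span1 :: "'a::field vec3 \<Rightarrow> 'a vec3 set" where
  "span1 v = {smul c v | c. True}"

definition span2 :: "'a::field vec3 \<Rightarrow> 'a vec3 \<Rightarrow> 'a vec3 set" where
  "span2 u v = {vadd (smul a u) (smul b v) | a b. True}"

definition lin_indep2 :: "'a::field vec3 \<Rightarrow> 'a vec3 \<Rightarrow> bool" where
  "lin_indep2 u v \<longleftrightarrow> (\<forall>a b. vadd (smul a u) (smul b v) = vzero \<longrightarrow> a = 0 \<and> b = 0)"

definition iso_points :: "nat \<Rightarrow> 'a::field vec3 set set" where
  "iso_points q = {span1 v | v. v \<noteq> vzero \<and> hform q v v = 0}"

definition two_spaces :: "'a::field vec3 set set" where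
  "two_spaces = {span2 u v | u v. lin_indep2 u v}"

definition nondeg_two_spaces :: "nat \<Rightarrow> 'a::field vec3 set set" where
  "nondeg_two_spaces q = {L \<in> two_spaces.
      \<forall>x\<in>L. (\<forall>y\<in>L. hform q x y = 0) \<longrightarrow> x = vzero}"

definition unital :: "nat \<Rightarrow> 'a::field vec3 set set set" where
  "unital q = {{P \<in> iso_points q. P \<subseteq> L} | L. L \<in> nondeg_two_spaces q}"

definition field_aut :: "('a::field \<Rightarrow> 'a) \<Rightarrow> bool" where
  "field_aut \<sigma> \<longleftrightarrow> bij \<sigma> \<and> (\<forall>a b. \<sigma> (a + b) = \<sigma> a + \<sigma> b \<and> \<sigma> (a * b) = \<sigma> a * \<sigma> b)"

text \<open>Semilinear bijections of V preserving phi (up to a nonzero scalar and the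
  associated field automorphism): the elements of Gamma U(3,q) (with similitudes);
  modulo scalars these induce PGammaU(3,q).\<close>
definition semilinear_pres :: "nat \<Rightarrow> ('a::field vec3 \<Rightarrow> 'a vec3) \<Rightarrow> bool" where
  "semilinear_pres q f \<longleftrightarrow> bij f \<and> (\<exists>\<sigma>. field_aut \<sigma> \<and>
      (\<forall>x y. f (vadd x y) = vadd (f x) (f y)) \<and>
      (\<forall>c x. f (smul c x) = smul (\<sigma> c) (f x)) \<and>
      (\<exists>mu. mu \<noteq> 0 \<and> (\<forall>x y. hform q (f x) (f y) = mu * \<sigma> (hform q x y))))"

definition PGammaU :: "nat \<Rightarrow> ('a::field vec3 set \<Rightarrow> 'a vec3 set) set" where
  "PGammaU q = {(\<lambda>P. f ` P) | f. semilinear_pres q f}"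

definition strongly_incidence_transitive ::
    "('p \<Rightarrow> 'p) set \<Rightarrow> 'p set \<Rightarrow> 'p set set \<Rightarrow> bool" where
  "strongly_incidence_transitive G X \<Gamma> \<longleftrightarrow>
     (\<forall>g\<in>G. (\<lambda>\<gamma>. g ` \<gamma>) ` \<Gamma> = \<Gamma>) \<and>
     (\<forall>\<gamma>1\<in>\<Gamma>. \<forall>\<gamma>2\<in>\<Gamma>. \<exists>g\<in>G. g ` \<gamma>1 = \<gamma>2) \<and>
     (\<forall>\<gamma>\<in>\<Gamma>. \<forall>a\<in>\<gamma>. \<forall>b\<in>X - \<gamma>. \<forall>a'\<in>\<gamma>. \<forall>b'\<in>X - \<gamma>.
        \<exists>g\<in>G. g ` \<gamma> = \<gamma> \<and> g a = a' \<and> g b = b')"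

definition johnson_adj :: "nat \<Rightarrow> 'p set \<Rightarrow> 'p set \<Rightarrow> bool" where
  "johnson_adj k A B \<longleftrightarrow> card (A \<inter> B) + 1 = k"

definition johnson_dist :: "'p set \<Rightarrow> nat \<Rightarrow> 'p set \<Rightarrow> 'p set \<Rightarrow> nat" where
  "johnson_dist X k A B = (LEAST n. \<exists>p :: nat \<Rightarrow> 'p set. p 0 = A \<and> p n = B \<and>
      (\<forall>i\<le>n. p i \<subseteq> X \<and> card (p i) = k) \<and> (\<forall>i<n. johnson_adj k (p i) (p (Suc i))))"

definition min_dist :: "'p set \<Rightarrow> nat \<Rightarrow> 'p set set \<Rightarrow> nat" where
  "min_dist X k \<Gamma> = Min {johnson_dist X k A B | A B. A \<in> \<Gamma> \<and> B \<in> \<Gamma> \<and> A \<noteq> B}"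

end

theory Submission
  imports Defs "HOL-Number_Theory.Residues" "HOL-Computational_Algebra.Polynomial"
begin

lemma fin_field_pow_card:
  fixes x :: "'a :: {field,finite}"
  shows "x ^ card (UNIV :: 'a set) = x"
proof (cases "x = 0")
  case False
  have "x * (\<Prod>y\<in>UNIV-{0}. x * y) = x * x ^ (card (UNIV :: 'a set) - 1) * \<Prod>(UNIV-{0})"
    by (simp add: prod.distrib mult_ac)
  also have "x * x ^ (card (UNIV :: 'a set) - 1) = x ^ Suc (card (UNIV :: 'a set) - 1)"
    by (subst power_Suc) auto
  also have "Suc (card (UNIV :: 'a set) - 1) = card (UNIV :: 'a set)"
    using finite_UNIV_card_ge_0[where ?'a = 'a] by simp
  also have "(\<Prod>y\<in>UNIV-{0}. x * y) = (\<Prod>y\<in>UNIV-{0}. y)"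
    by (rule prod.reindex_bij_witness[of _ "\<lambda>y. y / x" "\<lambda>y. x * y"]) (use False in auto)
  finally show ?thesis
    by simp
qed (use finite_UNIV_card_ge_0[where ?'a = 'a] in auto)

lemma frob_facts:
  assumes "\<exists>p k. prime p \<and> k > 0 \<and> q = p ^ k"
    and "card (UNIV :: 'a::{field,finite} set) = q ^ 2"
  shows "q \<ge> 2" "\<And>x y::'a. (x+y)^q = x^q + y^q" "\<And>x::'a. (x^q)^q = x"
proof -
  obtain p k where pk: "prime p" "k > 0" "q = p ^ k" using assms(1) by blast
  have "p \<ge> 2" using pk(1) prime_ge_2_nat by blast
  then have "p \<le> q" using pk by (metis One_nat_def Suc_leI dvd_imp_le dvd_power neq0_conv power_eq_0_iff prime_gt_0_nat pk(1))
  then show "q \<ge> 2" using \<open>p \<ge> 2\<close> by simp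
  have cp: "CHAR('a) > 0" by (rule finite_imp_CHAR_pos) simp
  have pc: "prime CHAR('a)" using cp prime_CHAR_semidom by blast
  have "CHAR('a) dvd p ^ (2*k)" using CHAR_dvd_CARD[where 'a='a] assms(2) pk(3)
    by (simp add: power_mult mult.commute)
  then have "CHAR('a) dvd p" using pc prime_dvd_power by blast
  then have cpe: "CHAR('a) = p" using pc pk(1) primes_dvd_imp_eq by blast
  show "\<And>x y::'a. (x+y)^q = x^q + y^q"
    by (rule freshmans_dream') (use pc cpe pk(3) in auto)
  show "\<And>x::'a. (x^q)^q = x"
    using fin_field_pow_card assms(2) by (metis power_mult power2_eq_square)
qed

lemma card_fibers_le:
  assumes "finite A" "\<And>y. card {x\<in>A. f x = y} \<le> k"
  shows "card A \<le> k * card (f ` A)"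
proof -
  have e: "(\<Union>y\<in>f ` A. {x\<in>A. f x = y}) = A" by blast
  have "card (\<Union>y\<in>f ` A. {x\<in>A. f x = y}) \<le> (\<Sum>y\<in>f ` A. card {x\<in>A. f x = y})"
    by (rule card_UN_le) (use assms(1) in simp)
  then have "card A \<le> (\<Sum>y\<in>f ` A. card {x\<in>A. f x = y})" by (simp only: e)
  also have "\<dots> \<le> (\<Sum>y\<in>f ` A. k)" by (rule sum_mono) (use assms(2) in blast)
  finally show ?thesis by (simp add: mult.commute)
qed

locale GQ =
  fixes q :: nat and T :: "'a::{field,finite} itself"
  assumes q2: "q \<ge> 2"
    and frob: "\<And>x y::'a. (x+y)^q = x^q + y^q"
    and frob2: "\<And>x::'a. (x^q)^q = x"
    and cardF: "card (UNIV::'a set) = q^2"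
begin

lemma frob0 [simp]: "(0::'a)^q = 0" using q2 by simp
lemma frob_neg: "(-x::'a)^q = -(x^q)"
proof -
  have "(x + -x)^q = x^q + (-x)^q" by (rule frob)
  then have "x^q + (-x)^q = 0" by simp
  then show ?thesis by (simp add: add_eq_0_iff)
qed
lemma frob_diff: "(x - y::'a)^q = x^q - y^q"
  using frob[of x "-y"] frob_neg[of y] by simp
lemma frob_inj: "(x::'a)^q = y^q \<longleftrightarrow> x = y"
  by (metis frob2)

lemma roots_le:
  assumes "n \<ge> 2"
  shows "card {x::'a. x^n + a*x = c} \<le> n"
proof -
  define p where "p = monom (1::'a) n + [:-c, a:]"
  have "degree [:-c, a:] \<le> 1" by (simp add: degree_pCons_le)
  then have d1: "degree [:-c, a:] < degree (monom (1::'a) n)"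
    using assms by (simp add: degree_monom_eq)
  have dp: "degree p = n" unfolding p_def using degree_add_eq_left[OF d1] by (simp add: degree_monom_eq)
  then have "p \<noteq> 0" using assms by auto
  have "{x::'a. x^n + a*x = c} = {x. poly p x = 0}"
    unfolding p_def by (auto simp: poly_monom algebra_simps)
  then show ?thesis using card_poly_roots_bound[OF \<open>p \<noteq> 0\<close>] dp by simp
qed

definition Fq :: "'a set" where "Fq = {x. x^q = x}"

lemma card_Fq_le: "card Fq \<le> q"
proof -
  have "Fq = {x::'a. x^q + (-1)*x = 0}" unfolding Fq_def by auto
  then show ?thesis using roots_le[OF q2, of "-1" 0] by presburger
qed

lemma trace_in_Fq: "(t + t^q::'a)^q = t + t^q"
  by (simp add: frob frob2 add.commute)

lemma trace_range: "range (\<lambda>t::'a. t + t^q) = Fq"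
proof -
  have sub: "range (\<lambda>t::'a. t + t^q) \<subseteq> Fq" unfolding Fq_def using trace_in_Fq by auto
  have "card (UNIV::'a set) \<le> q * card (range (\<lambda>t::'a. t + t^q))"
  proof (rule card_fibers_le)
    fix y
    have "{x \<in> UNIV. x + x^q = y} = {x::'a. x^q + 1*x = y}" by (auto simp: add.commute)
    then show "card {x \<in> UNIV. x + x^q = y} \<le> q" using roots_le[OF q2, of 1 y] by presburger
  qed simp
  then have "q * q \<le> q * card (range (\<lambda>t::'a. t + t^q))" using cardF by (simp add: power2_eq_square)
  then have "q \<le> card (range (\<lambda>t::'a. t + t^q))" using q2 by simp
  then have "card Fq \<le> card (range (\<lambda>t::'a. t + t^q))" using card_Fq_le by linarith
  then show ?thesis using card_seteq[OF finite sub] by blast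
qed

lemma card_Fq: "card Fq = q"
proof -
  have "card (UNIV::'a set) \<le> q * card (range (\<lambda>t::'a. t + t^q))"
  proof (rule card_fibers_le)
    fix y
    have "{x \<in> UNIV. x + x^q = y} = {x::'a. x^q + 1*x = y}" by (auto simp: add.commute)
    then show "card {x \<in> UNIV. x + x^q = y} \<le> q" using roots_le[OF q2, of 1 y] by presburger
  qed simp
  then have "q * q \<le> q * card Fq" using cardF trace_range by (simp add: power2_eq_square)
  then show ?thesis using q2 card_Fq_le by simp
qed

lemma trace_surj: "s^q = s \<Longrightarrow> \<exists>t::'a. t + t^q = s"
  using trace_range unfolding Fq_def by (metis (mono_tags, lifting) mem_Collect_eq rangeE)

lemma card_trace_ker: "card {z::'a. z + z^q = 0} = q"
proof -
  let ?K = "{z::'a. z + z^q = 0}"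
  have fib: "card {x::'a. x + x^q = c} = card ?K" if cF: "c \<in> Fq" for c
  proof -
    obtain x0 where x0: "x0 + x0^q = c" using trace_surj[of c] cF unfolding Fq_def by blast
    have "{x::'a. x + x^q = c} = (\<lambda>z. z + x0) ` ?K"
    proof (intro Set.set_eqI iffI)
      fix x assume "x \<in> {x::'a. x + x^q = c}"
      then have "x + x^q = c" by simp
      then have "(x - x0) + (x - x0)^q = 0" using x0 by (simp add: frob_diff algebra_simps)
      then show "x \<in> (\<lambda>z. z + x0) ` ?K" by (intro image_eqI[of _ _ "x - x0"]) auto
    next
      fix x assume "x \<in> (\<lambda>z. z + x0) ` ?K"
      then obtain z where "z + z^q = 0" "x = z + x0" by blast
      then have "x + x^q = (z + z^q) + (x0 + x0^q)" by (simp add: frob algebra_simps)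
      then show "x \<in> {x::'a. x + x^q = c}" using x0 \<open>z + z^q = 0\<close> by simp
    qed
    then show ?thesis by (simp add: card_image inj_on_def)
  qed
  have "UNIV = (\<Union>c\<in>Fq. {x::'a. x + x^q = c})" using trace_range by auto
  then have "card (UNIV::'a set) = card (\<Union>c\<in>Fq. {x::'a. x + x^q = c})" by simp
  also have "\<dots> = (\<Sum>c\<in>Fq. card {x::'a. x + x^q = c})"
    by (rule card_UN_disjoint) auto
  also have "\<dots> = (\<Sum>c\<in>Fq. card ?K)" using fib by simp
  also have "\<dots> = q * card ?K" using card_Fq by simp
  finally have "q * q = q * card ?K" using cardF by (simp add: power2_eq_square)
  then show ?thesis using q2 by simp
qed

lemma norm_surj:
  assumes "c \<noteq> 0" "c^q = c"
  shows "\<exists>x::'a. x^(Suc q) = c"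
proof -
  let ?A = "UNIV - {0::'a}"
  let ?f = "\<lambda>x::'a. x^(Suc q)"
  have sub: "?f ` ?A \<subseteq> Fq - {0}"
  proof
    fix y assume "y \<in> ?f ` ?A"
    then obtain x where "x \<noteq> 0" "y = x^(Suc q)" by auto
    moreover have "(x^(Suc q))^q = x^(Suc q)"
      by (simp add: power_mult_distrib frob2)
    ultimately show "y \<in> Fq - {0}" unfolding Fq_def by auto
  qed
  have "card ?A \<le> Suc q * card (?f ` ?A)"
  proof (rule card_fibers_le)
    fix y
    have "{x \<in> ?A. ?f x = y} \<subseteq> {x::'a. x^(Suc q) + 0*x = y}" by auto
    then show "card {x \<in> ?A. ?f x = y} \<le> Suc q"
      using roots_le[of "Suc q" 0 y] q2 by (meson card_mono finite le_trans le_SucI)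
  qed simp
  moreover have "card ?A = q*q - 1" using cardF by (simp add: power2_eq_square)
  moreover have "q*q - 1 = Suc q * (q - 1)" using q2 by (cases q) (auto simp: algebra_simps)
  ultimately have "Suc q * (q - 1) \<le> Suc q * card (?f ` ?A)" by simp
  then have "q - 1 \<le> card (?f ` ?A)" by (subst (asm) mult_le_cancel1) simp
  moreover have "0 \<in> Fq" unfolding Fq_def by simp
  then have "card (Fq - {0}) = q - 1" using card_Fq by simp
  ultimately have "?f ` ?A = Fq - {0}" using card_seteq[OF finite sub] by linarith
  moreover have "c \<in> Fq - {0}" using assms unfolding Fq_def by auto
  ultimately obtain x where "x \<in> ?A" "c = ?f x" by (metis imageE)
  then show ?thesis by blast
qed

lemma alpha0_ex: "\<exists>a::'a. a + a^q + 1 = 0"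
proof -
  have "(-1::'a)^q = -1" by (simp add: frob_neg)
  then obtain t::'a where "t + t^q = -1" using trace_surj by blast
  then show ?thesis by (intro exI[of _ t]) simp
qed

end

lemma vadd_simp [simp]: "vadd (a1,a2,a3) (b1,b2,b3) = (a1+b1, a2+b2, a3+b3)"
  by (simp add: vadd_def)
lemma smul_simp [simp]: "smul c (a1,a2,a3) = (c*a1, c*a2, c*a3)"
  by (simp add: smul_def)
lemma hform_simp [simp]: "hform q (a1,a2,a3) (b1,b2,b3) = a1 * b3^q + a3 * b1^q + a2 * b2^q"
  by (simp add: hform_def)

context GQ
begin

abbreviation H :: "'a vec3 \<Rightarrow> 'a vec3 \<Rightarrow> 'a" where "H \<equiv> hform q"

lemma h_add_l: "H (vadd x y) z = H x z + H y z"
  by (cases x; cases y; cases z) (simp add: algebra_simps)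
lemma h_add_r: "H z (vadd x y) = H z x + H z y"
  by (cases x; cases y; cases z) (simp add: algebra_simps frob)
lemma h_smul_l: "H (smul c x) y = c * H x y"
  by (cases x; cases y) (simp add: algebra_simps)
lemma h_smul_r: "H x (smul c y) = c^q * H x y"
  by (cases x; cases y) (simp add: algebra_simps power_mult_distrib)
lemma h_sym: "H y x = (H x y)^q"
  by (cases x; cases y) (simp add: algebra_simps power_mult_distrib frob frob2)
lemma h_self: "(H x x)^q = H x x"
  using h_sym[of x x] by simp

lemma h_zero_l [simp]: "H vzero y = 0"
  by (cases y) (simp add: vzero_def)
lemma h_zero_r [simp]: "H y vzero = 0"
  by (cases y) (simp add: vzero_def)

lemma vzero_eq_iff: "(H x (1,0,0) = 0 \<and> H x (0,1,0) = 0 \<and> H x (0,0,1) = 0) \<longleftrightarrow> x = vzero"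
  by (cases x) (auto simp: vzero_def)

lemma radical_zero: "(\<And>y. H x y = 0) \<Longrightarrow> x = vzero"
  using vzero_eq_iff by blast

definition lin3 :: "'a vec3 \<Rightarrow> 'a vec3 \<Rightarrow> 'a vec3 \<Rightarrow> 'a vec3 \<Rightarrow> 'a vec3" where
  "lin3 e z f x = (case x of (x1,x2,x3) \<Rightarrow> vadd (vadd (smul x1 e) (smul x2 z)) (smul x3 f))"

definition frame :: "'a vec3 \<Rightarrow> 'a vec3 \<Rightarrow> 'a vec3 \<Rightarrow> 'a \<Rightarrow> bool" where
  "frame e z f m \<longleftrightarrow> m \<noteq> 0 \<and> m^q = m \<and> H e e = 0 \<and> H f f = 0 \<and> H e f = m \<and> H z z = m
     \<and> H e z = 0 \<and> H f z = 0"

lemma frame_vals: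
  assumes "frame e z f m"
  shows "H e e = 0" "H f f = 0" "H e f = m" "H z z = m" "H e z = 0" "H f z = 0"
    "H f e = m" "H z e = 0" "H z f = 0" "m \<noteq> 0" "m^q = m"
  using assms unfolding frame_def by (auto simp: h_sym[of f e] h_sym[of e z] h_sym[of f z])

lemma lin3_simp: "lin3 e z f (x1,x2,x3) = vadd (vadd (smul x1 e) (smul x2 z)) (smul x3 f)"
  by (simp add: lin3_def)

lemma lin3_h:
  assumes "frame e z f m"
  shows "H (lin3 e z f x) (lin3 e z f y) = m * H x y"
proof -
  obtain x1 x2 x3 where x: "x = (x1,x2,x3)" by (cases x)
  obtain y1 y2 y3 where y: "y = (y1,y2,y3)" by (cases y)
  show ?thesis using frame_vals[OF assms] unfolding x y lin3_simp
    by (simp add: h_add_l h_add_r h_smul_l h_smul_r algebra_simps)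
qed

lemma lin3_add: "lin3 e z f (vadd x y) = vadd (lin3 e z f x) (lin3 e z f y)"
  by (cases x; cases y; cases e; cases z; cases f) (simp add: lin3_def algebra_simps)

lemma lin3_smul: "lin3 e z f (smul c x) = smul c (lin3 e z f x)"
  by (cases x; cases e; cases z; cases f) (simp add: lin3_def algebra_simps)

lemma lin3_inj:
  assumes "frame e z f m"
  shows "inj (lin3 e z f)"
proof (rule injI)
  fix x y assume eq: "lin3 e z f x = lin3 e z f y"
  have "H x w = H y w" for w
  proof -
    have "m * H x w = m * H y w" by (metis eq lin3_h[OF assms])
    then show ?thesis using frame_vals(10)[OF assms] by simp
  qed
  then have "H x (1,0,0) = H y (1,0,0)" "H x (0,1,0) = H y (0,1,0)" "H x (0,0,1) = H y (0,0,1)"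
    by blast+
  then show "x = y" by (cases x; cases y) simp
qed

lemma lin3_bij: "frame e z f m \<Longrightarrow> bij (lin3 e z f)"
  using lin3_inj finite_UNIV_inj_surj[of "lin3 e z f"] by (simp add: bij_def)

definition linsim :: "('a vec3 \<Rightarrow> 'a vec3) \<Rightarrow> 'a \<Rightarrow> bool" where
  "linsim g m \<longleftrightarrow> bij g \<and> m \<noteq> 0 \<and> (\<forall>x y. g (vadd x y) = vadd (g x) (g y)) \<and>
     (\<forall>c x. g (smul c x) = smul c (g x)) \<and> (\<forall>x y. H (g x) (g y) = m * H x y)"

lemma lin3_linsim: assumes "frame e z f m" shows "linsim (lin3 e z f) m"
  unfolding linsim_def using lin3_bij[OF assms] lin3_add lin3_smul lin3_h[OF assms] frame_vals(10)[OF assms] by blast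

lemma linsim_comp_inv:
  assumes "linsim g1 m1" "linsim g2 m2"
  shows "linsim (g2 \<circ> inv_into UNIV g1) (m2 / m1)"
proof -
  have b1: "bij g1" and m1: "m1 \<noteq> 0" and a1: "\<And>x y. g1 (vadd x y) = vadd (g1 x) (g1 y)"
    and s1: "\<And>c x. g1 (smul c x) = smul c (g1 x)" and h1: "\<And>x y. H (g1 x) (g1 y) = m1 * H x y"
    using assms(1) unfolding linsim_def by auto
  have b2: "bij g2" and m2: "m2 \<noteq> 0" and a2: "\<And>x y. g2 (vadd x y) = vadd (g2 x) (g2 y)"
    and s2: "\<And>c x. g2 (smul c x) = smul c (g2 x)" and h2: "\<And>x y. H (g2 x) (g2 y) = m2 * H x y"
    using assms(2) unfolding linsim_def by auto
  have gi: "g1 (inv_into UNIV g1 x) = x" for x using b1 by (simp add: bij_is_surj surj_f_inv_f)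
  have ig: "inv_into UNIV g1 (g1 x) = x" for x using b1 by (simp add: bij_is_inj)
  have ia: "inv_into UNIV g1 (vadd x y) = vadd (inv_into UNIV g1 x) (inv_into UNIV g1 y)" for x y
  proof -
    have "g1 (vadd (inv_into UNIV g1 x) (inv_into UNIV g1 y)) = vadd x y" by (simp add: a1 gi)
    then show ?thesis by (metis ig)
  qed
  have isl: "inv_into UNIV g1 (smul c x) = smul c (inv_into UNIV g1 x)" for c x
  proof -
    have "g1 (smul c (inv_into UNIV g1 x)) = smul c x" by (simp add: s1 gi)
    then show ?thesis by (metis ig)
  qed
  have ih: "H (inv_into UNIV g1 x) (inv_into UNIV g1 y) = H x y / m1" for x y
    using h1[of "inv_into UNIV g1 x" "inv_into UNIV g1 y"] m1 by (simp add: gi)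
  have "bij (g2 \<circ> inv_into UNIV g1)" using b1 b2 bij_comp bij_imp_bij_inv by blast
  then show ?thesis unfolding linsim_def using m1 m2
    by (simp add: ia isl a2 s2 h2 ih)
qed

lemma field_aut_id: "field_aut (id :: 'a \<Rightarrow> 'a)"
  unfolding field_aut_def by simp

lemma linsim_sl: "linsim g m \<Longrightarrow> semilinear_pres q g"
  unfolding linsim_def semilinear_pres_def
  by (intro conjI exI[of _ id]) (auto simp: field_aut_id)


end

lemma smul_smul: "smul a (smul b v) = smul (a*b) (v::'a::field vec3)"
  by (cases v) (simp add: algebra_simps)
lemma smul_one [simp]: "smul 1 (v::'a::field vec3) = v"
  by (cases v) simp
lemma smul_zero [simp]: "smul 0 (v::'a::field vec3) = vzero"
  by (cases v) (simp add: vzero_def)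
lemma smul_vzero [simp]: "smul c (vzero::'a::field vec3) = vzero"
  by (simp add: vzero_def)
lemma vadd_vzero [simp]: "vadd v vzero = (v::'a::field vec3)" "vadd vzero v = v"
  by (cases v; simp add: vzero_def)+
lemma smul_eq_vzero_iff: "smul c (v::'a::field vec3) = vzero \<longleftrightarrow> c = 0 \<or> v = vzero"
  by (cases v) (auto simp: vzero_def)

lemma span1_mem: "v \<in> span1 v" unfolding span1_def by (auto intro: exI[of _ 1])
lemma span1_scale: "c \<noteq> 0 \<Longrightarrow> span1 (smul c v) = span1 (v::'a::field vec3)"
  unfolding span1_def
proof (intro Set.set_eqI iffI)
  fix x assume "c \<noteq> 0" "x \<in> {smul d (smul c v) |d. True}"
  then show "x \<in> {smul d v |d. True}" by (auto simp: smul_smul)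
next
  fix x assume c: "c \<noteq> 0" and "x \<in> {smul d v |d. True}"
  then obtain d where "x = smul d v" by blast
  then have "x = smul (d/c) (smul c v)" using c by (simp add: smul_smul)
  then show "x \<in> {smul d (smul c v) |d. True}" by blast
qed

lemma span2_mem: "vadd (smul a u) (smul b v) \<in> span2 u v" unfolding span2_def by blast

lemma span2_closed:
  assumes "x \<in> span2 u v" "y \<in> span2 u v"
  shows "vadd (smul a x) (smul b y) \<in> span2 u (v::'a::field vec3)"
proof -
  obtain a1 b1 where x: "x = vadd (smul a1 u) (smul b1 v)" using assms(1) unfolding span2_def by blast
  obtain a2 b2 where y: "y = vadd (smul a2 u) (smul b2 v)" using assms(2) unfolding span2_def by blast
  have "vadd (smul a x) (smul b y) = vadd (smul (a*a1 + b*a2) u) (smul (a*b1+b*b2) v)"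
    unfolding x y by (cases u; cases v) (simp add: algebra_simps)
  then show ?thesis using span2_mem by metis
qed

lemma span2_left: "u \<in> span2 u (v::'a::field vec3)"
  using span2_mem[of 1 u 0 v] by simp
lemma span2_right: "v \<in> span2 u (v::'a::field vec3)"
  using span2_mem[of 0 u 1 v] by simp

lemma span1_sub_span2: "x \<in> span2 u v \<Longrightarrow> span1 x \<subseteq> span2 u (v::'a::field vec3)"
  unfolding span1_def using span2_closed[of x u v x _ 0] by auto

lemma span2_image: "span2 u v = (\<lambda>(a,b). vadd (smul a u) (smul b v)) ` UNIV"
proof (intro Set.set_eqI iffI)
  fix x assume "x \<in> span2 u v"
  then obtain a b where "x = vadd (smul a u) (smul b v)" unfolding span2_def by blast
  then show "x \<in> (\<lambda>(a,b). vadd (smul a u) (smul b v)) ` UNIV" by (intro image_eqI[of _ _ "(a,b)"]) auto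
next
  fix x assume "x \<in> (\<lambda>(a,b). vadd (smul a u) (smul b v)) ` UNIV"
  then show "x \<in> span2 u v" unfolding span2_def by auto
qed

lemma card_UNIV_prod: "card (UNIV::('a\<times>'b) set) = card (UNIV::'a set) * card (UNIV::'b set)"
  by (metis UNIV_Times_UNIV card_cartesian_product)

lemma card_span2_le: "card (span2 u (v::'a::{field,finite} vec3)) \<le> card (UNIV::'a set) * card (UNIV::'a set)"
proof -
  have "card (span2 u v) \<le> card (UNIV::('a\<times>'a) set)" unfolding span2_image by (rule card_image_le) simp
  then show ?thesis by (simp add: card_UNIV_prod)
qed

lemma card_span2:
  assumes "lin_indep2 u (v::'a::{field,finite} vec3)"
  shows "card (span2 u v) = card (UNIV::'a set) * card (UNIV::'a set)"
proof -
  have "inj (\<lambda>(a,b). vadd (smul a u) (smul b v))"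
  proof (rule injI, clarify)
    fix a b a' b' assume eq: "vadd (smul a u) (smul b v) = vadd (smul a' u) (smul b' v)"
    have "vadd (smul (a - a') u) (smul (b - b') v) = vzero"
      using eq by (cases u; cases v) (simp add: vzero_def algebra_simps)
    then show "a = a' \<and> b = b'" using assms unfolding lin_indep2_def by fastforce
  qed
  then have "card (span2 u v) = card (UNIV::('a\<times>'a) set)" unfolding span2_image by (rule card_image)
  then show ?thesis by (simp add: card_UNIV_prod)
qed

lemma span2_eq:
  assumes "lin_indep2 u v" "lin_indep2 e f" "e \<in> span2 u v" "f \<in> span2 u (v::'a::{field,finite} vec3)"
  shows "span2 e f = span2 u v"
proof -
  have "span2 e f \<subseteq> span2 u v"
    unfolding span2_def using span2_closed[OF assms(3,4)] unfolding span2_def by blast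
  moreover have "card (span2 e f) = card (span2 u v)" using card_span2[OF assms(1)] card_span2[OF assms(2)] by simp
  ultimately show ?thesis by (intro card_subset_eq) auto
qed

context GQ begin

lemma not_in_span2: "\<exists>x. x \<notin> span2 u (v::'a vec3)"
proof (rule ccontr)
  assume "\<not> ?thesis"
  then have "span2 u v = UNIV" by blast
  then have "card (UNIV::'a vec3 set) \<le> q^2 * q^2" using card_span2_le[of u v] cardF by simp
  moreover have "card (UNIV::'a vec3 set) = q^2 * (q^2 * q^2)" by (simp add: card_UNIV_prod cardF)
  moreover have "q^2 * q^2 < q^2 * (q^2 * q^2)" using q2 by simp
  ultimately show False by linarith
qed

end

context GQ begin

definition blk :: "'a vec3 set \<Rightarrow> 'a vec3 set set" where
  "blk L = {P \<in> iso_points q. P \<subseteq> L}"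

lemma unital_blk: "unital q = {blk L | L. L \<in> nondeg_two_spaces q}"
  unfolding unital_def blk_def by simp

lemma sl_props:
  fixes f :: "'a vec3 \<Rightarrow> 'a vec3"
  assumes "semilinear_pres q f"
  obtains \<sigma> mu where "bij f" "bij \<sigma>" "\<And>a b. \<sigma>(a+b) = \<sigma> a + \<sigma> b" "\<sigma> 0 = 0"
    "\<And>x y. f(vadd x y) = vadd (f x) (f y)" "\<And>c x. f (smul c x) = smul (\<sigma> c) (f x)"
    "mu \<noteq> 0" "\<And>x y. H (f x) (f y) = mu * \<sigma> (H x y)" "f vzero = vzero"
proof -
  obtain \<sigma> mu where s: "bij f" "field_aut \<sigma>" "\<forall>x y. f (vadd x y) = vadd (f x) (f y)"
    "\<forall>c x. f (smul c x) = smul (\<sigma> c) (f x)" "mu \<noteq> 0" "\<forall>x y. H (f x) (f y) = mu * \<sigma> (H x y)"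
    using assms unfolding semilinear_pres_def by blast
  have sa: "\<And>a b. \<sigma>(a+b) = \<sigma> a + \<sigma> b" using s(2) unfolding field_aut_def by blast
  have s0: "\<sigma> 0 = 0" using sa[of 0 0] by (metis add_0 add_cancel_right_right)
  have f0: "f vzero = vzero" using s(4) s0 by (metis smul_zero)
  show ?thesis
    by (rule that[of \<sigma> mu]) (use s sa s0 f0 in \<open>auto simp: field_aut_def\<close>)
qed

lemma sl_H0:
  fixes f :: "'a vec3 \<Rightarrow> 'a vec3"
  assumes "semilinear_pres q f"
  shows "H (f x) (f y) = 0 \<longleftrightarrow> H x y = 0"
proof -
  obtain \<sigma> mu where "bij \<sigma>" "\<sigma> 0 = 0" "mu \<noteq> 0" "\<And>x y. H (f x) (f y) = mu * \<sigma> (H x y)"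
    using sl_props[OF assms] by metis
  then show ?thesis by (metis bij_is_inj injD mult_eq_0_iff)
qed

lemma sl_span1:
  fixes f :: "'a vec3 \<Rightarrow> 'a vec3"
  assumes "semilinear_pres q f"
  shows "f ` span1 v = span1 (f v)"
proof -
  obtain \<sigma> mu where s: "bij \<sigma>" "\<And>c x. f (smul c x) = smul (\<sigma> c) (f x)"
    using sl_props[OF assms] by metis
  show ?thesis unfolding span1_def
  proof (intro Set.set_eqI iffI)
    fix x assume "x \<in> f ` {smul c v |c. True}"
    then obtain c where "x = f (smul c v)" by blast
    then have "x = smul (\<sigma> c) (f v)" using s(2) by presburger
    then show "x \<in> {smul c (f v) |c. True}" by blast
  next
    fix x assume "x \<in> {smul c (f v) |c. True}"
    then obtain c where x: "x = smul c (f v)" by blast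
    obtain c' where "\<sigma> c' = c" using s(1) by (metis bij_pointE)
    then have "x = f (smul c' v)" using x s(2) by simp
    then show "x \<in> f ` {smul c v |c. True}" by blast
  qed
qed

lemma sl_span2:
  fixes f :: "'a vec3 \<Rightarrow> 'a vec3"
  assumes "semilinear_pres q f"
  shows "f ` span2 u v = span2 (f u) (f v)"
proof -
  obtain \<sigma> mu where s: "bij \<sigma>" "\<And>c x. f (smul c x) = smul (\<sigma> c) (f x)"
     "\<And>x y. f(vadd x y) = vadd (f x) (f y)"
    using sl_props[OF assms] by metis
  show ?thesis unfolding span2_def
  proof (intro Set.set_eqI iffI)
    fix x assume "x \<in> f ` {vadd (smul a u) (smul b v) |a b. True}"
    then obtain a b where "x = f (vadd (smul a u) (smul b v))" by blast
    then have "x = vadd (smul (\<sigma> a) (f u)) (smul (\<sigma> b) (f v))" using s(2,3) by presburger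
    then show "x \<in> {vadd (smul a (f u)) (smul b (f v)) |a b. True}" by blast
  next
    fix x assume "x \<in> {vadd (smul a (f u)) (smul b (f v)) |a b. True}"
    then obtain a b where x: "x = vadd (smul a (f u)) (smul b (f v))" by blast
    obtain a' where a: "\<sigma> a' = a" using s(1) by (metis bij_pointE)
    obtain b' where b: "\<sigma> b' = b" using s(1) by (metis bij_pointE)
    have "x = f (vadd (smul a' u) (smul b' v))" using x a b s(2,3) by simp
    then show "x \<in> f ` {vadd (smul a u) (smul b v) |a b. True}" by blast
  qed
qed

lemma sl_indep:
  fixes f :: "'a vec3 \<Rightarrow> 'a vec3"
  assumes "semilinear_pres q f" "lin_indep2 u v"
  shows "lin_indep2 (f u) (f v)"
  unfolding lin_indep2_def
proof (intro allI impI)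
  obtain \<sigma> mu where s: "bij f" "bij \<sigma>" "\<And>c x. f (smul c x) = smul (\<sigma> c) (f x)"
     "\<And>x y. f(vadd x y) = vadd (f x) (f y)" "\<sigma> 0 = 0" "f vzero = vzero"
    using sl_props[OF assms(1)] by metis
  fix a b assume eq: "vadd (smul a (f u)) (smul b (f v)) = vzero"
  obtain a' where a: "\<sigma> a' = a" using s(2) by (metis bij_pointE)
  obtain b' where b: "\<sigma> b' = b" using s(2) by (metis bij_pointE)
  have "f (vadd (smul a' u) (smul b' v)) = f vzero" using eq a b s(3,4,6) by simp
  then have "vadd (smul a' u) (smul b' v) = vzero" using s(1) by (meson bij_is_inj injD)
  then have "a' = 0 \<and> b' = 0" using assms(2) unfolding lin_indep2_def by blast
  then show "a = 0 \<and> b = 0" using a b s(5) by simp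
qed

lemma sl_nondeg:
  fixes f :: "'a vec3 \<Rightarrow> 'a vec3"
  assumes "semilinear_pres q f" "L \<in> nondeg_two_spaces q"
  shows "f ` L \<in> nondeg_two_spaces q"
proof -
  obtain u v where L: "L = span2 u v" "lin_indep2 u v" "\<forall>x\<in>L. (\<forall>y\<in>L. H x y = 0) \<longrightarrow> x = vzero"
    using assms(2) unfolding nondeg_two_spaces_def two_spaces_def by blast
  have f0: "f vzero = vzero" using sl_props[OF assms(1)] by metis
  have "f ` L \<in> two_spaces" unfolding two_spaces_def L(1) sl_span2[OF assms(1)]
    using sl_indep[OF assms(1) L(2)] by blast
  moreover have "\<forall>x\<in>f ` L. (\<forall>y\<in>f ` L. H x y = 0) \<longrightarrow> x = vzero"
  proof (intro ballI impI)
    fix x assume x: "x \<in> f ` L" and h: "\<forall>y\<in>f ` L. H x y = 0"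
    obtain x' where x': "x' \<in> L" "x = f x'" using x by blast
    have "\<forall>y\<in>L. H x' y = 0" using h x' sl_H0[OF assms(1)] by blast
    then have "x' = vzero" using L(3) x'(1) by blast
    then show "x = vzero" using x' f0 by simp
  qed
  ultimately show ?thesis unfolding nondeg_two_spaces_def by blast
qed

lemma sl_iso:
  fixes f :: "'a vec3 \<Rightarrow> 'a vec3"
  assumes "semilinear_pres q f" "P \<in> iso_points q"
  shows "f ` P \<in> iso_points q"
proof -
  obtain v where v: "P = span1 v" "v \<noteq> vzero" "H v v = 0" using assms(2) unfolding iso_points_def by blast
  have f: "bij f" "f vzero = vzero" using sl_props[OF assms(1)] by metis+
  have "f v \<noteq> vzero" using v(2) f by (metis bij_is_inj injD)
  moreover have "H (f v) (f v) = 0" using v(3) sl_H0[OF assms(1)] by simp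
  ultimately show ?thesis unfolding iso_points_def v(1) sl_span1[OF assms(1)] by blast
qed

lemma sl_blk:
  fixes f :: "'a vec3 \<Rightarrow> 'a vec3"
  assumes "semilinear_pres q f"
  shows "(\<lambda>P. f ` P) ` blk L = blk (f ` L)"
proof (intro Set.set_eqI iffI)
  have f: "bij f" "f vzero = vzero" using sl_props[OF assms(1)] by metis+
  {
    fix Q assume "Q \<in> (\<lambda>P. f ` P) ` blk L"
    then obtain P where "P \<in> blk L" "Q = f ` P" by blast
    then show "Q \<in> blk (f ` L)" unfolding blk_def using sl_iso[OF assms] by auto
  }
  fix Q assume Q: "Q \<in> blk (f ` L)"
  obtain w where w: "Q = span1 w" "w \<noteq> vzero" "H w w = 0" "Q \<subseteq> f ` L"
    using Q unfolding blk_def iso_points_def by blast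
  obtain v where v: "w = f v" using f(1) by (metis bij_pointE)
  have "v \<noteq> vzero" using w(2) v f by auto
  moreover have "H v v = 0" using w(3) v sl_H0[OF assms] by simp
  ultimately have iso: "span1 v \<in> iso_points q" unfolding iso_points_def by blast
  have Qv: "Q = f ` span1 v" using w(1) v sl_span1[OF assms] by simp
  then have "span1 v \<subseteq> L" using w(4) f(1) by (simp add: bij_is_inj inj_image_subset_iff)
  then have "span1 v \<in> blk L" using iso unfolding blk_def by blast
  then show "Q \<in> (\<lambda>P. f ` P) ` blk L" using Qv by blast
qed

end

context GQ begin

lemma frob_ne0: "(x::'a) \<noteq> 0 \<Longrightarrow> x^q \<noteq> 0"
  using q2 by simp

lemma h_lin3_r: "H w (lin3 e z f c) = (fst c)^q * H w e + (fst (snd c))^q * H w z + (snd (snd c))^q * H w f"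
  by (cases c) (simp add: lin3_simp h_add_r h_smul_r)
lemma h_lin3_l: "H (lin3 e z f c) w = (fst c) * H e w + (fst (snd c)) * H z w + (snd (snd c)) * H f w"
  by (cases c) (simp add: lin3_simp h_add_l h_smul_l)

lemma aux_radical:
  assumes "H z e = 0" "H z y = 0" "H z z = 0" "H e e = 0" "H e y \<noteq> 0" "z \<noteq> vzero"
  shows False
proof -
  have hye: "H y e \<noteq> 0" using assms(5) h_sym[of y e] frob_ne0 by metis
  have hze: "H z e = 0" using assms by simp
  have inj: "inj (lin3 e z y)"
  proof (rule injI)
    fix a b assume eq: "lin3 e z y a = lin3 e z y b"
    obtain a1 a2 a3 where a: "a = (a1,a2,a3)" by (cases a)
    obtain b1 b2 b3 where b: "b = (b1,b2,b3)" by (cases b)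
    have "H (lin3 e z y a) e = H (lin3 e z y b) e" using eq by simp
    then have "a3 * H y e = b3 * H y e" using assms unfolding a b h_lin3_l by simp
    then have 3: "a3 = b3" using hye by simp
    have "H (lin3 e z y a) y = H (lin3 e z y b) y" using eq by simp
    then have "a1 * H e y + a3 * H y y = b1 * H e y + b3 * H y y" using assms unfolding a b h_lin3_l by simp
    then have 1: "a1 = b1" using 3 assms(5) by simp
    have "smul a2 z = smul b2 z" using eq unfolding a b lin3_simp 1 3
      by (cases e; cases z; cases y) simp
    then have "a2 = b2" using assms(6) by (cases z) (auto simp: vzero_def)
    then show "a = b" using a b 1 3 by simp
  qed
  then have surj: "surj (lin3 e z y)" using finite_UNIV_inj_surj[of "lin3 e z y"] by simp
  have "H z w = 0" for w
  proof -
    obtain c where "w = lin3 e z y c" using surj by (metis surjD)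
    then show ?thesis using assms q2 by (simp add: h_lin3_r)
  qed
  then have "z = vzero" by (rule radical_zero)
  then show False using assms(6) by simp
qed

lemma frame_indep:
  assumes "frame e z f m"
  shows "lin_indep2 e f"
  unfolding lin_indep2_def
proof (intro allI impI)
  fix a b assume eq: "vadd (smul a e) (smul b f) = vzero"
  have "H (vadd (smul a e) (smul b f)) f = 0" "H (vadd (smul a e) (smul b f)) e = 0"
    using eq by simp_all
  then have "a * m = 0" "b * m = 0" using frame_vals[OF assms] by (simp_all add: h_add_l h_smul_l)
  then show "a = 0 \<and> b = 0" using frame_vals(10)[OF assms] by simp
qed

lemma frame0:
  assumes L: "L \<in> nondeg_two_spaces q" and e: "e \<in> L" "e \<noteq> vzero" "H e e = 0"
  shows "\<exists>z f m. frame e z f m \<and> span2 e f = L"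
proof -
  obtain u v where uv: "L = span2 u v" "lin_indep2 u v" and nd: "\<forall>x\<in>L. (\<forall>y\<in>L. H x y = 0) \<longrightarrow> x = vzero"
    using L unfolding nondeg_two_spaces_def two_spaces_def by blast
  obtain y where y: "y \<in> L" "H e y \<noteq> 0" using nd e by blast
  have hye: "H y e \<noteq> 0" using y(2) h_sym[of y e] frob_ne0 by metis
  obtain x where x: "x \<notin> L" using not_in_span2 uv(1) by blast
  define \<beta> where "\<beta> = H x e / H y e"
  define \<alpha> where "\<alpha> = (H x y - \<beta> * H y y) / H e y"
  define z where "z = vadd x (vadd (smul (-\<alpha>) e) (smul (-\<beta>) y))"
  have hze: "H z e = 0" unfolding z_def using hye e(3)
    by (simp add: h_add_l h_smul_l \<beta>_def)
  have hzy: "H z y = 0" unfolding z_def using y(2)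
    by (simp add: h_add_l h_smul_l \<alpha>_def field_simps)
  have zne: "z \<noteq> vzero"
  proof
    assume "z = vzero"
    then have "x = vadd (smul \<alpha> e) (smul \<beta> y)" unfolding z_def
      by (cases x; cases e; cases y) (simp add: vzero_def algebra_simps)
    then have "x \<in> L" using span2_closed[of e u v y \<alpha> \<beta>] e(1) y(1) uv(1) by simp
    then show False using x by simp
  qed
  define m where "m = H z z"
  have m0: "m \<noteq> 0" using aux_radical[OF hze hzy _ e(3) y(2) zne] m_def by auto
  have mq: "m^q = m" unfolding m_def by (rule h_self)
  define c where "c = (m / H e y)^q"
  define y1 where "y1 = smul c y"
  have hey1: "H e y1 = m" unfolding y1_def c_def using y(2) by (simp add: h_smul_r frob2)
  have hy1e: "H y1 e = m" using hey1 h_sym[of y1 e] mq by simp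
  define s where "s = H y1 y1"
  have sq: "s^q = s" unfolding s_def by (rule h_self)
  have "(-s/m)^q = -s/m" using sq mq by (simp add: frob_neg power_divide)
  then obtain t where t: "t + t^q = -s/m" using trace_surj by blast
  define f where "f = vadd y1 (smul t e)"
  have hff: "H f f = 0"
  proof -
    have "H f f = s + t^q * m + t * m" unfolding f_def s_def
      using hey1 hy1e e(3) by (simp add: h_add_l h_add_r h_smul_l h_smul_r)
    also have "\<dots> = s + m * (t + t^q)" by (simp add: algebra_simps)
    also have "\<dots> = 0" using t m0 by simp
    finally show ?thesis .
  qed
  have hef: "H e f = m" unfolding f_def using hey1 e(3) by (simp add: h_add_r h_smul_r)
  have hez: "H e z = 0" using hze h_sym[of z e] by simp
  have hyz: "H y z = 0" using hzy h_sym[of z y] by simp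
  have hfz: "H f z = 0" unfolding f_def y1_def using hez hyz by (simp add: h_add_l h_smul_l)
  have fr: "frame e z f m" unfolding frame_def using m0 mq e(3) hff hef m_def hez hfz by simp
  have fL: "f \<in> L" unfolding f_def y1_def using span2_closed[of y u v e c t] y(1) e(1) uv(1) by simp
  have "span2 e f = L" using span2_eq[OF uv(2) frame_indep[OF fr]] e(1) fL uv(1) by simp
  then show ?thesis using fr by blast
qed

end

context GQ begin

lemma iso_in_span2:
  assumes "lin_indep2 u v"
  shows "\<exists>e\<in>span2 u v. e \<noteq> vzero \<and> H e e = 0"
proof -
  have un: "u \<noteq> vzero"
  proof
    assume "u = vzero"
    then have "vadd (smul 1 u) (smul 0 v) = vzero" by simp
    then have "(1::'a) = 0" using assms unfolding lin_indep2_def by blast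
    then show False by simp
  qed
  show ?thesis
  proof (cases "H u u = 0")
    case True then show ?thesis using un span2_left by blast
  next
    case huu: False
    define k where "k = H v u / H u u"
    define v' where "v' = vadd v (smul (-k) u)"
    have v'e: "v' = vadd (smul (-k) u) (smul 1 v)" unfolding v'_def
      by (cases u; cases v) (simp add: algebra_simps)
    have v'L: "v' \<in> span2 u v" using v'e span2_mem[of "-k" u 1 v] by simp
    have v'n: "v' \<noteq> vzero"
    proof
      assume "v' = vzero"
      then have "vadd (smul (-k) u) (smul 1 v) = vzero" using v'e by simp
      then have "(1::'a) = 0" using assms unfolding lin_indep2_def by blast
      then show False by simp
    qed
    have hv'u: "H v' u = 0" unfolding v'_def k_def using huu by (simp add: h_add_l h_smul_l)
    have huv': "H u v' = 0" using hv'u h_sym[of u v'] by simp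
    show ?thesis
    proof (cases "H v' v' = 0")
      case True then show ?thesis using v'L v'n by blast
    next
      case hvv: False
      define c where "c = - H v' v' / H u u"
      have c0: "c \<noteq> 0" unfolding c_def using hvv huu by simp
      have cq: "c^q = c" unfolding c_def using h_self[of v'] h_self[of u] by (simp add: frob_neg power_divide)
      obtain x where x: "x^(Suc q) = c" using norm_surj[OF c0 cq] by blast
      define w where "w = vadd (smul x u) v'"
      have we: "w = vadd (smul (x - k) u) (smul 1 v)" unfolding w_def v'_def
        by (cases u; cases v) (simp add: algebra_simps)
      have wL: "w \<in> span2 u v" using we span2_mem[of "x-k" u 1 v] by simp
      have wn: "w \<noteq> vzero"
      proof
        assume "w = vzero"
        then have "vadd (smul (x-k) u) (smul 1 v) = vzero" using we by simp
        then have "(1::'a) = 0" using assms unfolding lin_indep2_def by blast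
      then show False by simp
      qed
      have "H w w = x * x^q * H u u + x * H u v' + x^q * H v' u + H v' v'" unfolding w_def
        by (simp add: h_add_l h_add_r h_smul_l h_smul_r distrib_left mult.assoc add.assoc)
      also have "\<dots> = x * x^q * H u u + H v' v'" using hv'u huv' by simp
      also have "\<dots> = c * H u u + H v' v'" using x by (simp add: mult.commute)
      also have "\<dots> = 0" unfolding c_def using huu by simp
      finally show ?thesis using wL wn by blast
    qed
  qed
qed

definition a0 :: 'a where "a0 = (SOME a. a + a^q + 1 = 0)"
lemma a0_prop: "a0 + a0^q + 1 = 0"
  unfolding a0_def using alpha0_ex by (rule someI_ex)

lemma frame_full:
  assumes fr: "frame e z f m" and L: "span2 e f = L"
    and w: "w \<noteq> vzero" "H w w = 0" "w \<notin> L"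
  shows "\<exists>e' z' f' m'. frame e' z' f' m' \<and> span2 e' f' = L \<and> span1 e' = span1 e
           \<and> span1 (lin3 e' z' f' (a0,1,1)) = span1 w"
proof -
  note fv = frame_vals[OF fr]
  obtain x where wx: "w = lin3 e z f x" using lin3_bij[OF fr] by (metis bij_pointE)
  obtain x1 x2 x3 where x: "x = (x1,x2,x3)" by (cases x)
  have x2: "x2 \<noteq> 0"
  proof
    assume "x2 = 0"
    then have "w = vadd (smul x1 e) (smul x3 f)" unfolding wx x lin3_simp
      by (cases e; cases z; cases f) simp
    then have "w \<in> span2 e f" using span2_mem[of x1 e x3 f] by simp
    then show False using w(3) L by simp
  qed
  define \<alpha> where "\<alpha> = x1 / x2"
  define \<beta> where "\<beta> = x3 / x2"
  have x2q: "x2^q \<noteq> 0" using x2 frob_ne0 by blast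
  have "m * H x x = 0" using w(2) lin3_h[OF fr, of x x] wx by simp
  then have "x1 * x3^q + x3 * x1^q + x2 * x2^q = 0" using fv(10) x by simp
  then have "(x1 * x3^q + x3 * x1^q + x2 * x2^q) / (x2 * x2^q) = 0" by simp
  then have iso: "\<alpha> * \<beta>^q + \<beta> * \<alpha>^q + 1 = 0" unfolding \<alpha>_def \<beta>_def using x2 x2q
    by (simp add: power_divide add_divide_distrib)
  have b0: "\<beta> \<noteq> 0"
  proof
    assume "\<beta> = 0" then show False using iso q2 by simp
  qed
  define lam where "lam = (1/\<beta>)^q"
  have lq: "lam^q = 1/\<beta>" unfolding lam_def by (rule frob2)
  have l0: "lam \<noteq> 0" unfolding lam_def using b0 frob_ne0 by simp
  have bq0: "\<beta>^q \<noteq> 0" using b0 frob_ne0 by blast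
  have lb: "lam * \<beta>^q = 1" unfolding lam_def using bq0 by (simp add: power_divide)
  define d where "d = \<alpha> - lam * a0"
  define t where "t = d / \<beta>"
  have bq: "\<beta>^q \<noteq> 0" using b0 frob_ne0 by blast
  have dq: "d^q = \<alpha>^q - a0^q / \<beta>" unfolding d_def using lq by (simp add: frob_diff power_mult_distrib)
  have key: "d * \<beta>^q + d^q * \<beta> = 0"
  proof -
    have "d * \<beta>^q + d^q * \<beta> = d * \<beta>^q + (\<alpha>^q - a0^q / \<beta>) * \<beta>" by (simp only: dq)
    also have "\<dots> = (\<alpha> * \<beta>^q + \<beta> * \<alpha>^q) - (lam * \<beta>^q) * a0 - a0^q"
      unfolding d_def using b0 by (simp add: algebra_simps)
    also have "\<dots> = 0" using lb iso a0_prop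
      by (simp add: algebra_simps) (metis add.assoc add.commute add_eq_0_iff)
    finally show ?thesis .
  qed
  have tt: "t + t^q = 0"
  proof -
    have "t + t^q = d / \<beta> + d^q / \<beta>^q" unfolding t_def by (simp add: power_divide)
    also have "\<dots> = (d * \<beta>^q + d^q * \<beta>) / (\<beta> * \<beta>^q)" using add_frac_eq[OF b0 bq] .
    finally have "t + t^q = (d * \<beta>^q + d^q * \<beta>) / (\<beta> * \<beta>^q)" .
    then show ?thesis using key by simp
  qed
  define e' where "e' = smul lam e"
  define f' where "f' = smul \<beta> (vadd f (smul t e))"
  have fr': "frame e' z f' m"
  proof -
    have 1: "H e' e' = 0" unfolding e'_def using fv by (simp add: h_smul_l h_smul_r)
    have hg: "H (vadd f (smul t e)) (vadd f (smul t e)) = t^q * m + t * m"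
      using fv by (simp add: h_add_l h_add_r h_smul_l h_smul_r)
    have "H f' f' = \<beta> * \<beta>^q * H (vadd f (smul t e)) (vadd f (smul t e))"
      unfolding f'_def by (simp add: h_smul_l h_smul_r)
    also have "\<dots> = \<beta> * \<beta>^q * (m * (t + t^q))" using hg by (simp add: distrib_left mult.commute)
    finally have 2: "H f' f' = 0" using tt by simp
    have he: "H e (vadd f (smul t e)) = m" using fv by (simp add: h_add_r h_smul_r)
    have "H e' f' = lam * \<beta>^q * H e (vadd f (smul t e))" unfolding e'_def f'_def
      by (simp add: h_smul_l h_smul_r mult.assoc)
    then have 3: "H e' f' = m" using lb he by simp
    have 4: "H e' z = 0" unfolding e'_def using fv by (simp add: h_smul_l)
    have 5: "H f' z = 0" unfolding f'_def using fv by (simp add: h_smul_l h_add_l)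
    show ?thesis unfolding frame_def using 1 2 3 4 5 fv by simp
  qed
  have e'L: "e' \<in> span2 e f" unfolding e'_def using span2_mem[of lam e 0 f] by simp
  have f'L: "f' \<in> span2 e f"
  proof -
    have "f' = vadd (smul (\<beta>*t) e) (smul \<beta> f)" unfolding f'_def
      by (cases e; cases f) (simp add: algebra_simps)
    then show ?thesis using span2_mem[of "\<beta>*t" e \<beta> f] by simp
  qed
  have sp: "span2 e' f' = L" using span2_eq[OF frame_indep[OF fr] frame_indep[OF fr'] e'L f'L] L by simp
  have s1: "span1 e' = span1 e" unfolding e'_def using span1_scale[OF l0] .
  have "smul (1/x2) w = lin3 e z f (\<alpha>, 1, \<beta>)" unfolding wx x lin3_smul[symmetric] \<alpha>_def \<beta>_def
    using x2 by simp
  also have "\<dots> = lin3 e' z f' (a0,1,1)"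
  proof -
    have "\<beta> * t = d" unfolding t_def using b0 by simp
    then have "\<alpha> = a0 * lam + \<beta> * t" unfolding d_def by (simp add: algebra_simps)
    then show ?thesis unfolding lin3_simp e'_def f'_def
      by (cases e; cases z; cases f) (simp add: algebra_simps)
  qed
  finally have "span1 (lin3 e' z f' (a0,1,1)) = span1 w" using span1_scale[of "1/x2" w] x2 by simp
  then show ?thesis using fr' sp s1 by blast
qed

end

lemma jpath_lower:
  assumes "finite X" "p 0 = A" "p n = B" "\<forall>i\<le>n. p i \<subseteq> X \<and> card (p i) = k"
    "\<forall>i<n. johnson_adj k (p i) (p (Suc i))"
  shows "card (A - B) \<le> n"
proof -
  have fin: "finite (p i)" if "i \<le> n" for i using assms(1,4) that finite_subset by blast
  have "j \<le> n \<Longrightarrow> card (A - p j) \<le> j" for j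
  proof (induction j)
    case 0 then show ?case using assms(2) by simp
  next
    case (Suc j)
    have jn: "j < n" using Suc.prems by simp
    have c1: "card (p j - p (Suc j)) = 1"
    proof -
      have "card (p j - p (Suc j)) = card (p j) - card (p j \<inter> p (Suc j))"
        using fin[of j] jn by (intro card_Diff_subset_Int) auto
      moreover have "card (p j \<inter> p (Suc j)) + 1 = k" using assms(5) jn unfolding johnson_adj_def by blast
      moreover have "card (p j) = k" using assms(4) jn by simp
      ultimately show ?thesis by simp
    qed
    have "A - p (Suc j) \<subseteq> (A - p j) \<union> (p j - p (Suc j))" by blast
    then have "card (A - p (Suc j)) \<le> card ((A - p j) \<union> (p j - p (Suc j)))"
      using fin[of 0] fin[of j] jn assms(2) by (intro card_mono) auto
    also have "\<dots> \<le> card (A - p j) + card (p j - p (Suc j))" by (rule card_Un_le)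
    finally show ?case using Suc.IH jn c1 by simp
  qed
  then show ?thesis using assms(3) by (metis order_refl)
qed

lemma jpath_upper:
  assumes "finite X" "A \<subseteq> X" "B \<subseteq> X" "card A = k" "card B = k"
  shows "\<exists>p. p 0 = A \<and> p (card (A - B)) = B \<and> (\<forall>i\<le>card (A - B). p i \<subseteq> X \<and> card (p i) = k)
     \<and> (\<forall>i<card (A - B). johnson_adj k (p i) (p (Suc i)))"
  using assms
proof (induction "card (A - B)" arbitrary: A)
  case 0
  have fA: "finite A" "finite B" using 0 finite_subset by blast+
  then have "A \<subseteq> B" using 0 by auto
  then have "A = B" using fA 0 by (intro card_subset_eq) auto
  then show ?case using 0 by (intro exI[of _ "\<lambda>_. A"]) auto
next
  case (Suc n A)
  have fA: "finite A" "finite B" using Suc.prems finite_subset by blast+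
  obtain a where a: "a \<in> A - B" using Suc.hyps(2) by (metis card.empty ex_in_conv nat.distinct(1))
  have "card (B - A) = card B - card (B \<inter> A)" using fA by (intro card_Diff_subset_Int) auto
  moreover have "card (A - B) = card A - card (A \<inter> B)" using fA by (intro card_Diff_subset_Int) auto
  ultimately have "card (B - A) = card (A - B)" using Suc.prems by (simp add: Int_commute)
  then obtain b where b: "b \<in> B - A" using Suc.hyps(2) by (metis card.empty ex_in_conv nat.distinct(1))
  define A' where "A' = insert b (A - {a})"
  have k1: "k \<ge> 1" using a fA Suc.prems(4) by (metis DiffD1 card_0_eq empty_iff less_one not_le)
  have cA': "card A' = k" unfolding A'_def using a b fA Suc.prems(4) by (simp add: card_Diff_singleton) (use k1 in linarith)
  have A'X: "A' \<subseteq> X" unfolding A'_def using a b Suc.prems by auto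
  have "A' - B = (A - B) - {a}" unfolding A'_def using b by auto
  then have n: "n = card (A' - B)" using Suc.hyps(2) a fA by simp
  obtain p where p: "p 0 = A'" "p (card (A' - B)) = B" "\<forall>i\<le>card (A' - B). p i \<subseteq> X \<and> card (p i) = k"
     "\<forall>i<card (A' - B). johnson_adj k (p i) (p (Suc i))"
    using Suc.hyps(1)[OF n Suc.prems(1) A'X Suc.prems(3) cA' Suc.prems(5)] by blast
  define p' where "p' i = (if i = 0 then A else p (i - 1))" for i
  have adj0: "johnson_adj k A A'"
  proof -
    have "A \<inter> A' = A - {a}" unfolding A'_def using a b by auto
    then show ?thesis unfolding johnson_adj_def using a fA Suc.prems(4) k1 by (simp add: card_Diff_singleton)
  qed
  have "p' 0 = A" unfolding p'_def by simp
  moreover have "p' (card (A - B)) = B"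
  proof -
    have "card (A - B) = Suc (card (A' - B))" using n Suc.hyps(2) by simp
    then show ?thesis unfolding p'_def using p(2) by simp
  qed
  moreover have "\<forall>i\<le>card (A - B). p' i \<subseteq> X \<and> card (p' i) = k"
    unfolding p'_def using p(3) n Suc.hyps(2) Suc.prems by auto
  moreover have "\<forall>i<card (A - B). johnson_adj k (p' i) (p' (Suc i))"
  proof (intro allI impI)
    fix i assume i: "i < card (A - B)"
    show "johnson_adj k (p' i) (p' (Suc i))"
    proof (cases i)
      case 0 then show ?thesis unfolding p'_def using adj0 p(1) by simp
    next
      case (Suc j) then show ?thesis unfolding p'_def using p(4) i n Suc.hyps(2) by simp
    qed
  qed
  ultimately show ?case by blast
qed

lemma jdist:
  assumes "finite X" "A \<subseteq> X" "B \<subseteq> X" "card A = k" "card B = k"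
  shows "johnson_dist X k A B = card (A - B)"
  unfolding johnson_dist_def
proof (rule Least_equality)
  show "\<exists>p. p 0 = A \<and> p (card (A - B)) = B \<and> (\<forall>i\<le>card (A - B). p i \<subseteq> X \<and> card (p i) = k)
     \<and> (\<forall>i<card (A - B). johnson_adj k (p i) (p (Suc i)))" by (rule jpath_upper[OF assms])
next
  fix n assume "\<exists>p. p 0 = A \<and> p n = B \<and> (\<forall>i\<le>n. p i \<subseteq> X \<and> card (p i) = k)
     \<and> (\<forall>i<n. johnson_adj k (p i) (p (Suc i)))"
  then show "card (A - B) \<le> n" using jpath_lower[OF assms(1)] by blast
qed

context GQ begin

definition Lz :: "'a vec3 set" where "Lz = span2 (1,0,0) (0,0,1)"

lemma Lz_char: "(a,b,c) \<in> Lz \<longleftrightarrow> b = 0"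
proof
  assume "(a,b,c) \<in> Lz" then show "b = 0" unfolding Lz_def span2_def by auto
next
  assume "b = 0"
  then have "(a,b,c) = vadd (smul a (1,0,0)) (smul c (0,0,1))" by simp
  then show "(a,b,c) \<in> Lz" unfolding Lz_def using span2_mem[of a "(1,0,0)" c "(0,0,1)"] by simp
qed

lemma Lz_nondeg: "Lz \<in> nondeg_two_spaces q"
proof -
  have "lin_indep2 (1,0,0) (0,0,(1::'a))" unfolding lin_indep2_def by (simp add: vzero_def)
  then have "Lz \<in> two_spaces" unfolding two_spaces_def Lz_def by blast
  moreover have "\<forall>x\<in>Lz. (\<forall>y\<in>Lz. H x y = 0) \<longrightarrow> x = vzero"
  proof (intro ballI impI)
    fix x assume x: "x \<in> Lz" and h: "\<forall>y\<in>Lz. H x y = 0"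
    obtain a b c where xe: "x = (a,b,c)" by (cases x)
    have "H x (1,0,0) = 0" "H x (0,0,1) = 0" using h Lz_char by auto
    then show "x = vzero" using x q2 unfolding xe Lz_char by (simp add: vzero_def)
  qed
  ultimately show ?thesis unfolding nondeg_two_spaces_def by blast
qed

lemma span1_sub_Lz: "span1 v \<subseteq> Lz \<longleftrightarrow> v \<in> Lz"
  using span1_mem span1_sub_span2 unfolding Lz_def by blast

lemma span1_iff: "w \<in> span1 v \<longleftrightarrow> (\<exists>c. w = smul c v)"
  unfolding span1_def by blast

lemma blk_Lz: "blk Lz = insert (span1 (0,0,1)) ((\<lambda>z. span1 (1,0,z)) ` {z. z + z^q = 0})"
proof (intro Set.set_eqI iffI)
  fix P assume "P \<in> blk Lz"
  then obtain v where v: "P = span1 v" "v \<noteq> vzero" "H v v = 0" "v \<in> Lz"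
    unfolding blk_def iso_points_def using span1_sub_Lz by blast
  obtain a b c where ve: "v = (a,b,c)" by (cases v)
  have b: "b = 0" using v(4) ve Lz_char by simp
  have hv: "a * c^q + c * a^q = 0" using v(3) ve b q2 by simp
  show "P \<in> insert (span1 (0,0,1)) ((\<lambda>z. span1 (1,0,z)) ` {z. z + z^q = 0})"
  proof (cases "a = 0")
    case True
    then have c: "c \<noteq> 0" using v(2) ve b by (simp add: vzero_def)
    have "span1 (0,0,c) = span1 (0,0,1)" using span1_scale[OF c, of "(0,0,1)"] by simp
    then have "P = span1 (0,0,1)" using v(1) ve b True by simp
    then show ?thesis by simp
  next
    case False
    have aq: "a^q \<noteq> 0" using False frob_ne0 by blast
    define z where "z = c / a"
    have "z + z^q = c / a + c^q / a^q" unfolding z_def by (simp add: power_divide)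
    also have "\<dots> = (c * a^q + c^q * a) / (a * a^q)" by (rule add_frac_eq[OF False aq])
    also have "\<dots> = (a * c^q + c * a^q) / (a * a^q)" by (simp add: mult.commute add.commute)
    finally have "z + z^q = (a * c^q + c * a^q) / (a * a^q)" .
    then have zk: "z + z^q = 0" using hv by simp
    have "span1 (a,0,a*z) = span1 (1,0,z)" using span1_scale[OF False, of "(1,0,z)"] by simp
    moreover have "a * z = c" unfolding z_def using False by simp
    ultimately have "P = span1 (1,0,z)" using v(1) ve b by simp
    then show ?thesis using zk by blast
  qed
next
  fix P :: "'a vec3 set" assume P: "P \<in> insert (span1 (0,0,1)) ((\<lambda>z. span1 (1,0,z)) ` {z. z + z^q = 0})"
  show "P \<in> blk Lz"
  proof (cases "P = span1 (0,0,1)")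
    case True
    have "(0,0,1) \<noteq> (vzero::'a vec3)" "H (0,0,1) (0,0,1) = 0" "(0,0,1::'a) \<in> Lz"
      using q2 by (simp_all add: vzero_def Lz_char)
    then show ?thesis unfolding blk_def iso_points_def True using span1_sub_Lz by blast
  next
    case False
    then obtain z where z: "P = span1 (1,0,z)" "z + z^q = 0" using P by blast
    have "(1,0,z) \<noteq> (vzero::'a vec3)" "H (1,0,z) (1,0,z) = 0" "(1,0,z) \<in> Lz"
      using q2 z(2) by (simp_all add: vzero_def Lz_char add.commute)
    then show ?thesis unfolding blk_def iso_points_def z(1) using span1_sub_Lz by blast
  qed
qed

lemma card_blk_Lz: "card (blk Lz) = Suc q"
proof -
  let ?K = "{z::'a. z + z^q = 0}"
  have inj: "inj_on (\<lambda>z. span1 (1,0,z)) ?K"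
  proof (rule inj_onI)
    fix z z' assume "span1 (1,0,z) = span1 (1,0,(z'::'a))"
    then have "(1,0,z') \<in> span1 (1,0,z)" using span1_mem by blast
    then obtain c where "(1,0,z') = smul c (1,0,z)" using span1_iff by blast
    then show "z = z'" by simp
  qed
  have notin: "span1 (0,0,1) \<notin> (\<lambda>z. span1 (1,0,z)) ` ?K"
  proof
    assume "span1 (0,0,1) \<in> (\<lambda>z. span1 (1,0,z)) ` ?K"
    then obtain z where "span1 (0,0,1) = span1 (1,0,(z::'a))" by blast
    then have "(0,0,1) \<in> span1 (1,0,z)" using span1_mem by blast
    then obtain c where "(0,0,1) = smul c (1,0,z)" using span1_iff by blast
    then show False by auto
  qed
  have "card (blk Lz) = Suc (card ((\<lambda>z. span1 (1,0,z)) ` ?K))"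
    unfolding blk_Lz using notin by (simp add: card_insert_if)
  also have "\<dots> = Suc q" using card_image[OF inj] card_trace_ker by simp
  finally show ?thesis .
qed

lemma lin3_e: "lin3 e z f (1,0,0) = e" by (cases e; cases z; cases f) (simp add: lin3_def)
lemma lin3_f: "lin3 e z f (0,0,1) = f" by (cases e; cases z; cases f) (simp add: lin3_def)

lemma blk_frame:
  assumes "frame e z f m"
  shows "(\<lambda>P. lin3 e z f ` P) ` blk Lz = blk (span2 e f)"
proof -
  have sl: "semilinear_pres q (lin3 e z f)" using linsim_sl[OF lin3_linsim[OF assms]] .
  have "lin3 e z f ` Lz = span2 (lin3 e z f (1,0,0)) (lin3 e z f (0,0,1))"
    unfolding Lz_def by (rule sl_span2[OF sl])
  then have "lin3 e z f ` Lz = span2 e f" by (simp only: lin3_e lin3_f)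
  then show ?thesis using sl_blk[OF sl, of Lz] by simp
qed

lemma inj_image_image: "inj (f :: 'b \<Rightarrow> 'c) \<Longrightarrow> inj (\<lambda>P. f ` P)"
  by (rule injI) (simp add: inj_image_eq_iff)

lemma card_blk_frame:
  assumes "frame e z f m"
  shows "card (blk (span2 e f)) = Suc q"
proof -
  have "inj (\<lambda>P. lin3 e z f ` P)" using inj_image_image lin3_inj[OF assms] by blast
  then have "inj_on (\<lambda>P. lin3 e z f ` P) (blk Lz)" by (rule inj_on_subset) simp
  then have "card ((\<lambda>P. lin3 e z f ` P) ` blk Lz) = card (blk Lz)" by (rule card_image)
  then show ?thesis using blk_frame[OF assms] card_blk_Lz by simp
qed

lemma nondeg_span2:
  assumes "L \<in> nondeg_two_spaces q"
  obtains u v where "L = span2 u v" "lin_indep2 u v" "\<forall>x\<in>L. (\<forall>y\<in>L. H x y = 0) \<longrightarrow> x = vzero"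
  using assms unfolding nondeg_two_spaces_def two_spaces_def by blast

lemma gamma_frame:
  assumes "\<gamma> \<in> unital q"
  shows "\<exists>e z f m. frame e z f m \<and> \<gamma> = blk (span2 e f)"
proof -
  obtain L where L: "\<gamma> = blk L" "L \<in> nondeg_two_spaces q" using assms unfolding unital_blk by blast
  obtain u v where uv: "L = span2 u v" "lin_indep2 u v" using nondeg_span2[OF L(2)] by blast
  obtain e where e: "e \<in> L" "e \<noteq> vzero" "H e e = 0" using iso_in_span2[OF uv(2)] uv(1) by blast
  obtain z f m where "frame e z f m" "span2 e f = L" using frame0[OF L(2) e] by blast
  then show ?thesis using L(1) by blast
qed

lemma move:
  assumes F1: "frame e z f m" and F2: "frame e' z' f' m'"
  shows "\<exists>g\<in>PGammaU q. g ` blk (span2 e f) = blk (span2 e' f') \<and> g (span1 e) = span1 e'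
     \<and> (\<forall>c. g (span1 (lin3 e z f c)) = span1 (lin3 e' z' f' c))"
proof -
  define \<Phi> where "\<Phi> = lin3 e' z' f' \<circ> inv_into UNIV (lin3 e z f)"
  have ls: "linsim \<Phi> (m' / m)" unfolding \<Phi>_def
    by (rule linsim_comp_inv[OF lin3_linsim[OF F1] lin3_linsim[OF F2]])
  have sl: "semilinear_pres q \<Phi>" by (rule linsim_sl[OF ls])
  have g: "(\<lambda>P. \<Phi> ` P) \<in> PGammaU q" unfolding PGammaU_def using sl by blast
  have \<Phi>c: "\<Phi> (lin3 e z f c) = lin3 e' z' f' c" for c
    unfolding \<Phi>_def using lin3_inj[OF F1] by simp
  have \<Phi>e: "\<Phi> e = e'" using \<Phi>c[of "(1,0,0)"] by (simp add: lin3_e)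
  have \<Phi>f: "\<Phi> f = f'" using \<Phi>c[of "(0,0,1)"] by (simp add: lin3_f)
  have "\<Phi> ` span2 e f = span2 e' f'" using sl_span2[OF sl, of e f] \<Phi>e \<Phi>f by simp
  then have "(\<lambda>P. \<Phi> ` P) ` blk (span2 e f) = blk (span2 e' f')" using sl_blk[OF sl, of "span2 e f"] by simp
  moreover have "\<Phi> ` span1 e = span1 e'" using sl_span1[OF sl, of e] \<Phi>e by simp
  moreover have "\<forall>c. \<Phi> ` span1 (lin3 e z f c) = span1 (lin3 e' z' f' c)"
    using sl_span1[OF sl] \<Phi>c by simp
  ultimately show ?thesis using g by blast
qed

lemma triple_frame:
  assumes "\<gamma> \<in> unital q" "a \<in> \<gamma>" "b \<in> iso_points q - \<gamma>"
  shows "\<exists>e z f m. frame e z f m \<and> \<gamma> = blk (span2 e f) \<and> a = span1 e \<and> b = span1 (lin3 e z f (a0,1,1))"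
proof -
  obtain L where L: "\<gamma> = blk L" "L \<in> nondeg_two_spaces q" using assms unfolding unital_blk by blast
  obtain u v where uv: "L = span2 u v" "lin_indep2 u v" using nondeg_span2[OF L(2)] by blast
  obtain e0 where e0: "a = span1 e0" "e0 \<noteq> vzero" "H e0 e0 = 0" "a \<subseteq> L"
    using assms(2) L(1) unfolding blk_def iso_points_def by blast
  have e0L: "e0 \<in> L" using e0(1,4) span1_mem by blast
  obtain z f m where F: "frame e0 z f m" "span2 e0 f = L" using frame0[OF L(2) e0L e0(2,3)] by blast
  obtain w where w: "b = span1 w" "w \<noteq> vzero" "H w w = 0" using assms(3) unfolding iso_points_def by blast
  have wL: "w \<notin> L"
  proof
    assume "w \<in> L"
    then have "b \<subseteq> L" using w(1) uv(1) span1_sub_span2 by blast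
    then have "b \<in> \<gamma>" using assms(3) L(1) unfolding blk_def by blast
    then show False using assms(3) by blast
  qed
  obtain e' z' f' m' where F': "frame e' z' f' m'" "span2 e' f' = L" "span1 e' = span1 e0"
      "span1 (lin3 e' z' f' (a0,1,1)) = span1 w"
    using frame_full[OF F w(2,3) wL] by blast
  have "\<gamma> = blk (span2 e' f')" "a = span1 e'" "b = span1 (lin3 e' z' f' (a0,1,1))"
    using L(1) e0(1) w(1) F' by simp_all
  then show ?thesis using F'(1) by blast
qed

lemma blk_inter:
  assumes "L1 \<in> nondeg_two_spaces q" "L2 \<in> nondeg_two_spaces q"
    "P \<in> blk L1 \<inter> blk L2" "Q \<in> blk L1 \<inter> blk L2" "P \<noteq> Q"
  shows "blk L1 = blk L2"
proof -
  obtain u1 v1 where uv1: "L1 = span2 u1 v1" "lin_indep2 u1 v1" using nondeg_span2[OF assms(1)] by blast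
  obtain u2 v2 where uv2: "L2 = span2 u2 v2" "lin_indep2 u2 v2" using nondeg_span2[OF assms(2)] by blast
  obtain p where p: "P = span1 p" "p \<noteq> vzero" "P \<subseteq> L1" "P \<subseteq> L2"
    using assms(3) unfolding blk_def iso_points_def by blast
  obtain p' where p': "Q = span1 p'" "p' \<noteq> vzero" "Q \<subseteq> L1" "Q \<subseteq> L2"
    using assms(4) unfolding blk_def iso_points_def by blast
  have ind: "lin_indep2 p p'"
    unfolding lin_indep2_def
  proof (intro allI impI)
    fix a b assume eq: "vadd (smul a p) (smul b p') = vzero"
    show "a = 0 \<and> b = 0"
    proof (cases "a = 0")
      case True
      then have "smul b p' = vzero" using eq by simp
      then show ?thesis using True p'(2) smul_eq_vzero_iff by blast
    next
      case False
      have sc: "x = (-b/a) * y" if "a * x + b * y = 0" for x y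
      proof -
        have "a * x = -(b*y)" using that by (simp add: eq_neg_iff_add_eq_0)
        then show ?thesis using False by (simp add: field_simps)
      qed
      obtain x1 x2 x3 where px: "p = (x1,x2,x3)" by (cases p)
      obtain y1 y2 y3 where py: "p' = (y1,y2,y3)" by (cases p')
      have "a * x1 + b * y1 = 0" "a * x2 + b * y2 = 0" "a * x3 + b * y3 = 0"
        using eq unfolding px py by (simp_all add: vzero_def)
      then have pe: "p = smul (-b/a) p'" unfolding px py using sc by simp
      have b0: "-b/a \<noteq> 0"
      proof
        assume h: "-b/a = 0"
        have "p = smul (-b/a) p'" by (rule pe)
        also have "\<dots> = vzero" by (simp only: h smul_zero)
        finally show False using p(2) by simp
      qed
      have "P = Q" using p(1) p'(1) pe span1_scale[OF b0] by simp
      then show ?thesis using assms(5) by simp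
    qed
  qed
  have pL: "p \<in> L1" "p \<in> L2" "p' \<in> L1" "p' \<in> L2" using p p' span1_mem by blast+
  have "span2 p p' = L1" using span2_eq[OF uv1(2) ind] pL uv1(1) by simp
  moreover have "span2 p p' = L2" using span2_eq[OF uv2(2) ind] pL uv2(1) by simp
  ultimately show ?thesis by simp
qed

end

context GQ begin

abbreviation Gam :: "'a vec3 set set set" where "Gam \<equiv> unital q"
abbreviation Xp :: "'a vec3 set set" where "Xp \<equiv> iso_points q"
abbreviation Grp :: "('a vec3 set \<Rightarrow> 'a vec3 set) set" where "Grp \<equiv> PGammaU q"

lemma card_gamma: "\<gamma> \<in> Gam \<Longrightarrow> card \<gamma> = q + 1"
proof -
  assume "\<gamma> \<in> Gam"
  then obtain e z f m where "frame e z f m" "\<gamma> = blk (span2 e f)" using gamma_frame by blast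
  then show ?thesis using card_blk_frame by simp
qed

lemma gamma_sub: "\<gamma> \<in> Gam \<Longrightarrow> \<gamma> \<subseteq> Xp"
  unfolding unital_blk blk_def by blast

lemma inter_le1:
  assumes "A \<in> Gam" "B \<in> Gam" "A \<noteq> B"
  shows "card (A \<inter> B) \<le> 1"
proof -
  obtain L1 where L1: "A = blk L1" "L1 \<in> nondeg_two_spaces q" using assms(1) unfolding unital_blk by blast
  obtain L2 where L2: "B = blk L2" "L2 \<in> nondeg_two_spaces q" using assms(2) unfolding unital_blk by blast
  have "\<forall>P\<in>A \<inter> B. \<forall>Q\<in>A \<inter> B. P = Q"
  proof (intro ballI)
    fix P Q assume "P \<in> A \<inter> B" "Q \<in> A \<inter> B"
    then show "P = Q" using blk_inter[OF L1(2) L2(2)] L1(1) L2(1) assms(3) by blast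
  qed
  then show ?thesis using card_le_Suc0_iff_eq[of "A \<inter> B"] by simp
qed

lemma jd_gamma:
  assumes "A \<in> Gam" "B \<in> Gam"
  shows "johnson_dist (Xp) (q + 1) A B = q + 1 - card (A \<inter> B)"
proof -
  have "johnson_dist (Xp) (q + 1) A B = card (A - B)"
    by (rule jdist) (use assms gamma_sub card_gamma in simp_all)
  also have "\<dots> = card A - card (A \<inter> B)" by (rule card_Diff_subset_Int) simp
  finally show ?thesis using card_gamma[OF assms(1)] by simp
qed

definition Lo :: "'a vec3 set" where "Lo = span2 (1,0,0) (0,1,1)"

lemma Lo_nondeg: "Lo \<in> nondeg_two_spaces q"
proof -
  have "lin_indep2 (1,0,0) (0,1,(1::'a))" unfolding lin_indep2_def by (simp add: vzero_def)
  then have "Lo \<in> two_spaces" unfolding two_spaces_def Lo_def by blast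
  moreover have "\<forall>x\<in>Lo. (\<forall>y\<in>Lo. H x y = 0) \<longrightarrow> x = vzero"
  proof (intro ballI impI)
    fix x assume x: "x \<in> Lo" and h: "\<forall>y\<in>Lo. H x y = 0"
    obtain a b where xe: "x = vadd (smul a (1,0,0)) (smul b (0,1,1))" using x unfolding Lo_def span2_def by blast
    have "H x (1,0,0) = 0" "H x (0,1,1) = 0" using h span2_left span2_right unfolding Lo_def by blast+
    then show "x = vzero" using q2 unfolding xe by (simp add: vzero_def)
  qed
  ultimately show ?thesis unfolding nondeg_two_spaces_def by blast
qed

lemma exists_pair: "\<exists>A\<in>Gam. \<exists>B\<in>Gam. A \<noteq> B \<and> card (A \<inter> B) = 1"
proof -
  have A: "blk Lz \<in> Gam" using Lz_nondeg unfolding unital_blk by blast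
  have B: "blk Lo \<in> Gam" using Lo_nondeg unfolding unital_blk by blast
  have "(1,0,0) \<noteq> (vzero::'a vec3)" "H (1,0,0) (1,0,0) = 0" using q2 by (simp_all add: vzero_def)
  then have iso1: "span1 (1,0,0) \<in> Xp" unfolding iso_points_def by blast
  have P: "span1 (1,0,0) \<in> blk Lz \<inter> blk Lo" unfolding blk_def using iso1
    span1_sub_Lz[of "(1,0,0)"] Lz_char span1_sub_span2[OF span2_left[of "(1,0,0)" "(0,1,1)"]]
    unfolding Lo_def by auto
  have "(a0,1,1) \<noteq> (vzero::'a vec3)" "H (a0,1,1) (a0,1,1) = 0" using q2 a0_prop
    by (simp_all add: vzero_def add.commute add.left_commute)
  then have iso2: "span1 (a0,1,1) \<in> Xp" unfolding iso_points_def by blast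
  have "(a0,1,1) \<in> Lo" unfolding Lo_def using span2_mem[of a0 "(1,0,0)" 1 "(0,1,1)"] by simp
  then have Q: "span1 (a0,1,1) \<in> blk Lo" unfolding blk_def Lo_def using iso2 span1_sub_span2 by blast
  have Q': "span1 (a0,1,1) \<notin> blk Lz" unfolding blk_def using span1_sub_Lz Lz_char by simp
  have ne: "blk Lz \<noteq> blk Lo" using Q Q' by blast
  have "card (blk Lz \<inter> blk Lo) \<le> 1" by (rule inter_le1[OF A B ne])
  moreover have "blk Lz \<inter> blk Lo \<noteq> {}" using P by blast
  then have "card (blk Lz \<inter> blk Lo) \<ge> 1" by (simp add: card_gt_0_iff Suc_le_eq)
  ultimately have "card (blk Lz \<inter> blk Lo) = 1" by simp
  then show ?thesis using A B ne by blast
qed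

theorem main_GQ:
  "strongly_incidence_transitive (Grp) (Xp) (Gam)
       \<and> min_dist (Xp) (q + 1) (Gam) = q"
proof
  show "strongly_incidence_transitive (Grp) (Xp) (Gam)"
    unfolding strongly_incidence_transitive_def
  proof (intro conjI ballI)
    fix g assume "g \<in> Grp"
    then obtain f where g: "g = (\<lambda>P. f ` P)" "semilinear_pres q f" unfolding PGammaU_def by blast
    have sub: "(\<lambda>\<gamma>. g ` \<gamma>) ` Gam \<subseteq> Gam"
    proof
      fix x assume "x \<in> (\<lambda>\<gamma>. g ` \<gamma>) ` Gam"
      then obtain L where "x = g ` blk L" "L \<in> nondeg_two_spaces q" unfolding unital_blk by blast
      then show "x \<in> Gam" unfolding unital_blk g(1) sl_blk[OF g(2)] using sl_nondeg[OF g(2)] by blast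
    qed
    have "inj f" using g(2) unfolding semilinear_pres_def by (simp add: bij_is_inj)
    then have "inj g" unfolding g(1) by (rule inj_image_image)
    then have "inj (\<lambda>\<gamma>. g ` \<gamma>)" by (rule inj_image_image)
    then have "inj_on (\<lambda>\<gamma>. g ` \<gamma>) (Gam)" by (rule inj_on_subset) simp
    then have "card ((\<lambda>\<gamma>. g ` \<gamma>) ` Gam) = card (Gam)" by (rule card_image)
    then show "(\<lambda>\<gamma>. g ` \<gamma>) ` Gam = Gam" using sub by (intro card_subset_eq) simp_all
  next
    fix \<gamma>1 \<gamma>2 assume "\<gamma>1 \<in> Gam" "\<gamma>2 \<in> Gam"
    obtain e z f m where F1: "frame e z f m" "\<gamma>1 = blk (span2 e f)" using gamma_frame \<open>\<gamma>1 \<in> Gam\<close> by blast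
    obtain e' z' f' m' where F2: "frame e' z' f' m'" "\<gamma>2 = blk (span2 e' f')" using gamma_frame \<open>\<gamma>2 \<in> Gam\<close> by blast
    obtain g where "g \<in> Grp" "g ` blk (span2 e f) = blk (span2 e' f')" using move[OF F1(1) F2(1)] by blast
    then show "\<exists>g\<in>Grp. g ` \<gamma>1 = \<gamma>2" using F1(2) F2(2) by blast
  next
    fix \<gamma> a b a' b' assume as: "\<gamma> \<in> Gam" "a \<in> \<gamma>" "b \<in> Xp - \<gamma>" "a' \<in> \<gamma>" "b' \<in> Xp - \<gamma>"
    obtain e z f m where F1: "frame e z f m" "\<gamma> = blk (span2 e f)" "a = span1 e"
      "b = span1 (lin3 e z f (a0,1,1))" using triple_frame[OF as(1,2,3)] by blast
    obtain e' z' f' m' where F2: "frame e' z' f' m'" "\<gamma> = blk (span2 e' f')" "a' = span1 e'"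
      "b' = span1 (lin3 e' z' f' (a0,1,1))" using triple_frame[OF as(1,4,5)] by blast
    note F = F1 F2
    obtain g where "g \<in> Grp" "g ` blk (span2 e f) = blk (span2 e' f')" "g (span1 e) = span1 e'"
      "\<forall>c. g (span1 (lin3 e z f c)) = span1 (lin3 e' z' f' c)" using move[OF F(1) F(5)] by blast
    then have "g ` \<gamma> = \<gamma>" "g a = a'" "g b = b'" using F by simp_all
    then show "\<exists>g\<in>Grp. g ` \<gamma> = \<gamma> \<and> g a = a' \<and> g b = b'" using \<open>g \<in> Grp\<close> by blast
  qed
next
  let ?S = "{johnson_dist (Xp) (q + 1) A B |A B. A \<in> Gam \<and> B \<in> Gam \<and> A \<noteq> B}"
  have fin: "finite ?S"
  proof (rule finite_subset)
    show "?S \<subseteq> (\<lambda>(A,B). johnson_dist (Xp) (q + 1) A B) ` (Gam \<times> Gam)" by auto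
  qed simp
  have lb: "q \<le> y" if yS: "y \<in> ?S" for y
  proof -
    obtain A B where AB: "y = johnson_dist (Xp) (q + 1) A B" "A \<in> Gam" "B \<in> Gam" "A \<noteq> B"
      using yS by blast
    show ?thesis using jd_gamma[OF AB(2,3)] inter_le1[OF AB(2,3,4)] AB(1) by simp
  qed
  obtain A B where AB: "A \<in> Gam" "B \<in> Gam" "A \<noteq> B" "card (A \<inter> B) = 1" using exists_pair by blast
  have "q \<in> ?S" using jd_gamma[OF AB(1,2)] AB by force
  then show "min_dist (Xp) (q + 1) (Gam) = q" unfolding min_dist_def
    using Min_eqI[OF fin lb] by blast
qed

end

theorem lemma8p2:
  fixes q :: nat
    and \<Gamma> :: "'a::{field,finite} vec3 set set set"
  assumes "\<exists>p k. prime p \<and> k > 0 \<and> q = p ^ k"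
    and "card (UNIV :: 'a set) = q ^ 2"
    and "\<Gamma> = unital q"
  shows "strongly_incidence_transitive (PGammaU q) (iso_points q) \<Gamma>
       \<and> min_dist (iso_points q) (q + 1) \<Gamma> = q"
proof -
  have ff: "q \<ge> 2" "\<And>x y::'a. (x+y)^q = x^q + y^q" "\<And>x::'a. (x^q)^q = x"
    using frob_facts[OF assms(1,2)] by blast+
  interpret GQ q "TYPE('a)"
    by (rule GQ.intro) (use ff assms(2) in auto)
  show ?thesis using main_GQ assms(3) by simp
qed

end
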